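(* Let $A$ be an $n\times n$ matrix over $\mathbb{Z}_4+u\mathbb{Z}_4$ such that $A^T=A$. Then the code over $\mathbb{Z}_4+u\mathbb{Z}_4$ generated by the matrix $[I_n\,|\,A]$ is a formally self-dual code of length $2n$.
   Context: $\mathbb{Z}_4+u\mathbb{Z}_4$ is the commutative ring of characteristic $4$ with $u^2=0$. A linear code of length $N$ is a submodule of $(\mathbb{Z}_4+u\mathbb{Z}_4)^N$; its dual is taken with respect to the Euclidean inner product $\sum_i x_iy_i$ in the ring. The Lee weight on $\mathbb{Z}_4+u\mathbb{Z}_4$ is $w_L(a+ub)=w_L(b)+w_L(a+b)$, where the Lee weight on $\mathbb{Z}_4$ is $0,1,2,1$ for $0,1,2,3$, extended additively to vectors. A linear code is formally self-dual if it has the same Lee weight enumerator as its dual. *)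

theory Defs
  imports Main "HOL-Library.Numeral_Type" "HOL-Library.Product_Plus"
begin

text \<open>The ring Z4 + u Z4 (u^2 = 0): the element a + u b is represented by the pair (a, b)
  with a, b :: 4 (integers mod 4). Addition is componentwise (Product_Plus), so the
  additive identity is (0,0) and finite sums are taken componentwise.\<close>

type_synonym zu4 = "4 \<times> 4"

definition zu_mul :: "zu4 \<Rightarrow> zu4 \<Rightarrow> zu4" where
  "zu_mul x y = (fst x * fst y, fst x * snd y + snd x * fst y)"

definition zu_one :: zu4 where "zu_one = (1, 0)"

definition lee_z4 :: "4 \<Rightarrow> nat" where
  "lee_z4 x = (if x = 0 then 0 else if x = 2 then 2 else 1)"

definition lee_zu :: "zu4 \<Rightarrow> nat" where
  "lee_zu x = lee_z4 (snd x) + lee_z4 (fst x + snd x)"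

definition lee_weight :: "zu4 list \<Rightarrow> nat" where
  "lee_weight v = sum_list (map lee_zu v)"

definition generated_code :: "nat \<Rightarrow> nat \<Rightarrow> (nat \<Rightarrow> nat \<Rightarrow> zu4) \<Rightarrow> zu4 list set" where
  "generated_code k N G =
     {map (\<lambda>j. \<Sum>i<k. zu_mul (c i) (G i j)) [0..<N] | c. True}"

definition dual_code :: "nat \<Rightarrow> zu4 list set \<Rightarrow> zu4 list set" where
  "dual_code N C = {y. length y = N \<and> (\<forall>x\<in>C. (\<Sum>i<N. zu_mul (x ! i) (y ! i)) = 0)}"

text \<open>Lee weight enumerator, given by its coefficients: number of codewords of Lee weight w.\<close>
definition lee_enum :: "zu4 list set \<Rightarrow> nat \<Rightarrow> nat" where
  "lee_enum C w = card {c \<in> C. lee_weight c = w}"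

definition formally_self_dual :: "nat \<Rightarrow> zu4 list set \<Rightarrow> bool" where
  "formally_self_dual N C \<longleftrightarrow> lee_enum C = lee_enum (dual_code N C)"

definition gen_IA :: "nat \<Rightarrow> (nat \<Rightarrow> nat \<Rightarrow> zu4) \<Rightarrow> nat \<Rightarrow> nat \<Rightarrow> zu4" where
  "gen_IA n A i j = (if j < n then (if i = j then zu_one else 0) else A i (j - n))"

end

theory Submission
  imports Defs
begin

lemma four_cases: "(x::4) = 0 \<or> x = 1 \<or> x = 2 \<or> x = 3"
proof (cases x rule: bit0_cases)
  case (of_int z)
  then have "z = 0 \<or> z = 1 \<or> z = 2 \<or> z = 3" by auto
  then show ?thesis using of_int by auto
qed

lemma lee_z4_neg: "lee_z4 (-x) = lee_z4 x"
  using four_cases[of x] by (auto simp: lee_z4_def)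

lemma lee_zu_neg: "lee_zu (-x) = lee_zu x"
proof (cases x)
  case (Pair a b)
  have "-a + -b = -(a+b)" by simp
  then show ?thesis unfolding lee_zu_def Pair by (simp only: uminus_prod_def fst_conv snd_conv lee_z4_neg)
qed

lemma zu_mul_comm: "zu_mul x y = zu_mul y x"
  by (simp add: zu_mul_def algebra_simps)
lemma zu_mul_assoc: "zu_mul (zu_mul x y) z = zu_mul x (zu_mul y z)"
  by (simp add: zu_mul_def algebra_simps)
lemma zu_mul_zero[simp]: "zu_mul x 0 = 0" "zu_mul 0 x = 0"
  by (simp_all add: zu_mul_def zero_prod_def)
lemma zu_mul_one[simp]: "zu_mul x zu_one = x" "zu_mul zu_one x = x"
  by (simp_all add: zu_mul_def zu_one_def)
lemma zu_mul_add: "zu_mul x (y + z) = zu_mul x y + zu_mul x z"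
  by (simp add: zu_mul_def algebra_simps)
lemma zu_mul_add2: "zu_mul (y + z) x = zu_mul y x + zu_mul z x"
  by (simp add: zu_mul_def algebra_simps)
lemma zu_mul_neg: "zu_mul x (- y) = - zu_mul x y"
  by (simp add: zu_mul_def algebra_simps)
lemma zu_mul_sum: "zu_mul x (sum f S) = (\<Sum>i\<in>S. zu_mul x (f i))"
  by (induct S rule: infinite_finite_induct) (simp_all add: zu_mul_add)
lemma zu_mul_sum2: "zu_mul (sum f S) x = (\<Sum>i\<in>S. zu_mul (f i) x)"
  by (induct S rule: infinite_finite_induct) (simp_all add: zu_mul_add2)

lemma sum_split_nat: "(\<Sum>j<n+m. f j) = (\<Sum>j<n. f j) + (\<Sum>j<m. f (n+j))" for f :: "nat \<Rightarrow> 'a::comm_monoid_add"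
  by (induct m) (simp_all add: add.assoc)

lemma lee_weight_map: "lee_weight (map f [0..<N]) = (\<Sum>j<N. lee_zu (f j))"
  unfolding lee_weight_def by (induct N) simp_all
definition SS :: "nat \<Rightarrow> (nat\<Rightarrow>nat\<Rightarrow>zu4) \<Rightarrow> (nat \<Rightarrow> zu4) \<Rightarrow> nat \<Rightarrow> zu4" where
  "SS n A c j = (\<Sum>k<n. zu_mul (c k) (A k j))"
definition cw :: "nat \<Rightarrow> (nat\<Rightarrow>nat\<Rightarrow>zu4) \<Rightarrow> (nat \<Rightarrow> zu4) \<Rightarrow> zu4 list" where
  "cw n A c = map (\<lambda>j. if j<n then c j else SS n A c (j-n)) [0..<2*n]"
definition dw :: "nat \<Rightarrow> (nat\<Rightarrow>nat\<Rightarrow>zu4) \<Rightarrow> (nat \<Rightarrow> zu4) \<Rightarrow> zu4 list" where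
  "dw n A c = map (\<lambda>j. if j<n then - SS n A c j else c (j-n)) [0..<2*n]"

lemma C_eq: "generated_code n (2*n) (gen_IA n A) = range (cw n A)"
proof -
  have "map (\<lambda>j. \<Sum>i<n. zu_mul (c i) (gen_IA n A i j)) [0..<2*n] = cw n A c" for c
    unfolding cw_def
  proof (rule map_cong[OF refl])
    fix j assume "j \<in> set [0..<2*n]"
    show "(\<Sum>i<n. zu_mul (c i) (gen_IA n A i j)) = (if j<n then c j else SS n A c (j-n))"
    proof (cases "j < n")
      case True
      have "(\<Sum>i<n. zu_mul (c i) (gen_IA n A i j)) = (\<Sum>i<n. if i = j then c j else 0)"
        by (rule sum.cong) (auto simp: gen_IA_def True)
      also have "\<dots> = c j" using True by (simp add: sum.delta')
      finally show ?thesis using True by simp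
    next
      case False
      then show ?thesis by (simp add: gen_IA_def SS_def)
    qed
  qed
  then show ?thesis unfolding generated_code_def by auto
qed

lemma len_cw[simp]: "length (cw n A c) = 2*n" and len_dw[simp]: "length (dw n A c) = 2*n"
  by (simp_all add: cw_def dw_def)

lemma ip_cw: "(\<Sum>i<2*n. zu_mul (cw n A c ! i) (y!i)) =
   (\<Sum>i<n. zu_mul (c i) (y!i)) + (\<Sum>j<n. zu_mul (SS n A c j) (y!(n+j)))"
proof -
  have "(\<Sum>i<2*n. zu_mul (cw n A c ! i) (y!i)) = (\<Sum>i<n+n. zu_mul (cw n A c ! i) (y!i))"
    by (simp add: mult_2)
  also have "\<dots> = (\<Sum>i<n. zu_mul (cw n A c ! i) (y!i)) + (\<Sum>j<n. zu_mul (cw n A c ! (n+j)) (y!(n+j)))"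
    by (rule sum_split_nat)
  also have "\<dots> = (\<Sum>i<n. zu_mul (c i) (y!i)) + (\<Sum>j<n. zu_mul (SS n A c j) (y!(n+j)))"
    by (simp add: cw_def)
  finally show ?thesis .
qed

lemma SS_cong: "(\<And>k. k<n \<Longrightarrow> c k = d k) \<Longrightarrow> SS n A c j = SS n A d j"
  unfolding SS_def by (rule sum.cong) auto

lemma swap_sum:
  assumes sym: "\<forall>i<n. \<forall>j<n. A i j = A j i"
  shows "(\<Sum>i<n. zu_mul (c' i) (SS n A c i)) = (\<Sum>j<n. zu_mul (SS n A c' j) (c j))"
proof -
  have "(\<Sum>i<n. zu_mul (c' i) (SS n A c i)) = (\<Sum>i<n. \<Sum>k<n. zu_mul (c' i) (zu_mul (c k) (A k i)))"
    by (simp add: SS_def zu_mul_sum)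
  also have "\<dots> = (\<Sum>i<n. \<Sum>k<n. zu_mul (zu_mul (c' i) (A i k)) (c k))"
  proof (intro sum.cong refl)
    fix i k assume "i \<in> {..<n}" "k \<in> {..<n}"
    then have "A k i = A i k" using sym by auto
    then show "zu_mul (c' i) (zu_mul (c k) (A k i)) = zu_mul (zu_mul (c' i) (A i k)) (c k)"
      by (metis zu_mul_assoc zu_mul_comm)
  qed
  also have "\<dots> = (\<Sum>k<n. \<Sum>i<n. zu_mul (zu_mul (c' i) (A i k)) (c k))"
    by (rule sum.swap)
  also have "\<dots> = (\<Sum>j<n. zu_mul (SS n A c' j) (c j))"
    by (simp add: SS_def zu_mul_sum2)
  finally show ?thesis .
qed

lemma D_eq:
  assumes sym: "\<forall>i<n. \<forall>j<n. A i j = A j i"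
  shows "dual_code (2*n) (range (cw n A)) = range (dw n A)"
proof
  show "range (dw n A) \<subseteq> dual_code (2*n) (range (cw n A))"
  proof (clarsimp simp: dual_code_def)
    fix c c'
    have "(\<Sum>i<2*n. zu_mul (cw n A c' ! i) (dw n A c ! i)) =
      (\<Sum>i<n. zu_mul (c' i) (- SS n A c i)) + (\<Sum>j<n. zu_mul (SS n A c' j) (c j))"
      unfolding ip_cw by (simp add: dw_def)
    also have "\<dots> = 0" using swap_sum[OF sym, of c' c]
      by (simp add: zu_mul_neg sum_negf)
    finally show "(\<Sum>i<2*n. zu_mul (cw n A c' ! i) (dw n A c ! i)) = 0" .
  qed
next
  show "dual_code (2*n) (range (cw n A)) \<subseteq> range (dw n A)"
  proof
    fix y assume y: "y \<in> dual_code (2*n) (range (cw n A))"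
    then have ly: "length y = 2*n" and orth: "\<And>c. (\<Sum>i<2*n. zu_mul (cw n A c ! i) (y!i)) = 0"
      by (auto simp: dual_code_def)
    define d where "d k = y!(n+k)" for k
    have "y = dw n A d"
    proof (rule nth_equalityI)
      show "length y = length (dw n A d)" using ly by simp
      fix j assume "j < length y"
      then have j: "j < 2*n" using ly by simp
      show "y!j = dw n A d ! j"
      proof (cases "j < n")
        case False
        then show ?thesis using j by (simp add: dw_def d_def)
      next
        case True
        define e where "e i = (if i = j then zu_one else 0)" for i
        have "(\<Sum>i<n. zu_mul (e i) (y!i)) = (\<Sum>i<n. if i = j then y!j else 0)"
          by (rule sum.cong) (auto simp: e_def)
        also have "\<dots> = y!j" using True by (simp add: sum.delta')
        finally have 1: "(\<Sum>i<n. zu_mul (e i) (y!i)) = y!j" .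
        have "SS n A e k = A j k" for k
        proof -
          have "SS n A e k = (\<Sum>i<n. if i = j then A j k else 0)"
            unfolding SS_def by (rule sum.cong) (auto simp: e_def)
          then show ?thesis using True by (simp add: sum.delta')
        qed
        then have "(\<Sum>k<n. zu_mul (SS n A e k) (y!(n+k))) = (\<Sum>k<n. zu_mul (d k) (A k j))"
          using sym True by (auto simp: d_def zu_mul_comm intro!: sum.cong)
        also have "\<dots> = SS n A d j" by (simp add: SS_def)
        finally have "y!j + SS n A d j = 0" using orth[of e] 1 ip_cw[of n A e y] by simp
        then have "y!j = - SS n A d j" by (simp add: eq_neg_iff_add_eq_0)
        then show ?thesis using True j by (simp add: dw_def)
      qed
    qed
    then show "y \<in> range (dw n A)" by blast
  qed
qed

lemma weight_eq: "lee_weight (dw n A c) = lee_weight (cw n A c)"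
proof -
  have a: "lee_weight (cw n A c) = (\<Sum>j<n. lee_zu (c j)) + (\<Sum>j<n. lee_zu (SS n A c j))"
    unfolding cw_def lee_weight_map mult_2 sum_split_nat by simp
  have b: "lee_weight (dw n A c) = (\<Sum>j<n. lee_zu (- SS n A c j)) + (\<Sum>j<n. lee_zu (c j))"
    unfolding dw_def lee_weight_map mult_2 sum_split_nat by simp
  show ?thesis unfolding a b lee_zu_neg by simp
qed

definition hh :: "nat \<Rightarrow> zu4 list \<Rightarrow> zu4 list" where
  "hh n v = map (\<lambda>j. if j<n then - v!(n+j) else v!(j-n)) [0..<2*n]"

lemma hh_cw: "hh n (cw n A c) = dw n A c"
  by (auto simp: hh_def cw_def dw_def)

lemma inj_hh: "inj_on (hh n) (range (cw n A))"
proof (rule inj_onI, clarify)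
  fix c d assume "hh n (cw n A c) = hh n (cw n A d)"
  then have e: "dw n A c = dw n A d" by (simp add: hh_cw)
  have cd: "c k = d k" if "k < n" for k
  proof -
    have "dw n A c ! (n+k) = dw n A d ! (n+k)" using e by simp
    then show ?thesis using that by (simp add: dw_def)
  qed
  then have "SS n A c j = SS n A d j" for j by (rule SS_cong)
  then show "cw n A c = cw n A d" using cd by (simp add: cw_def)
qed

theorem theorem5p1:
  fixes n :: nat and A :: "nat \<Rightarrow> nat \<Rightarrow> zu4"
  assumes "\<forall>i<n. \<forall>j<n. A i j = A j i"
  shows "(\<forall>c \<in> generated_code n (2 * n) (gen_IA n A). length c = 2 * n)
         \<and> formally_self_dual (2 * n) (generated_code n (2 * n) (gen_IA n A))"
proof
  show "\<forall>c \<in> generated_code n (2 * n) (gen_IA n A). length c = 2 * n"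
    unfolding C_eq by simp
  have D: "range (dw n A) = hh n ` range (cw n A)"
    by (auto simp: hh_cw image_iff)
  have "lee_enum (range (cw n A)) w = lee_enum (range (dw n A)) w" for w
  proof -
    have "{x \<in> range (dw n A). lee_weight x = w} = hh n ` {x \<in> range (cw n A). lee_weight x = w}"
      by (auto simp: hh_cw weight_eq image_iff) (metis hh_cw weight_eq)
    moreover have "inj_on (hh n) {x \<in> range (cw n A). lee_weight x = w}"
      using inj_hh by (rule inj_on_subset) auto
    ultimately show ?thesis unfolding lee_enum_def by (simp add: card_image)
  qed
  then show "formally_self_dual (2 * n) (generated_code n (2 * n) (gen_IA n A))"
    unfolding formally_self_dual_def C_eq D_eq[OF assms] by auto
qed
end
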